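(* If $X$ and $Y$ are balanced words with $X\sim Y$, then $E(X)=E(Y)$.
   Context: $\mathcal{A}$ is the free associative $\mathbb{C}$-algebra on noncommuting generators $L,R$; words are finite products of these letters. A word is balanced if it contains equally many $L$'s and $R$'s. $\mathcal{J}$ is the two-sided ideal generated by $\{FG-GF : F,G \text{ nonempty balanced words}\}$ and $X\sim Y$ means $X-Y\in\mathcal{J}$. For a balanced word $W=a_1\cdots a_n$ and $0\le k\le n$, $e_k(W)=\sum_{i=1}^k\overline{a_i}$ with $\overline{R}=1$, $\overline{L}=-1$; the elevation multiset $E(W)$ is the multiset $\{e_0(W),e_1(W),\dots,e_n(W)\}$. *)

theory Defs
  imports Complex_Main "HOL-Library.Multiset"
begin

datatype letter = L | R
type_synonym word = "letter list"

text \<open>Elements of the free associative algebra A = C<L,R>: finitely supported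
  coefficient functions on words.\<close>
type_synonym alg = "word \<Rightarrow> complex"

definition fin_supp :: "alg \<Rightarrow> bool" where
  "fin_supp p \<longleftrightarrow> finite {w. p w \<noteq> 0}"

definition mono :: "word \<Rightarrow> alg" where
  "mono w = (\<lambda>u. if u = w then 1 else 0)"

definition aadd :: "alg \<Rightarrow> alg \<Rightarrow> alg" where
  "aadd p q = (\<lambda>w. p w + q w)"

definition asub :: "alg \<Rightarrow> alg \<Rightarrow> alg" where
  "asub p q = (\<lambda>w. p w - q w)"

text \<open>Product in A (concatenation extended bilinearly).\<close>
definition amult :: "alg \<Rightarrow> alg \<Rightarrow> alg" where
  "amult p q = (\<lambda>w. \<Sum>i\<le>length w. p (take i w) * q (drop i w))"

definition balanced :: "word \<Rightarrow> bool" where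
  "balanced w \<longleftrightarrow> count_list w L = count_list w R"

inductive_set J :: "alg set" where
  gen: "\<lbrakk>F \<noteq> []; G \<noteq> []; balanced F; balanced G\<rbrakk>
        \<Longrightarrow> asub (mono (F @ G)) (mono (G @ F)) \<in> J"
| zero: "(\<lambda>_. 0) \<in> J"
| add: "\<lbrakk>p \<in> J; q \<in> J\<rbrakk> \<Longrightarrow> aadd p q \<in> J"
| lmult: "\<lbrakk>p \<in> J; fin_supp a\<rbrakk> \<Longrightarrow> amult a p \<in> J"
| rmult: "\<lbrakk>p \<in> J; fin_supp a\<rbrakk> \<Longrightarrow> amult p a \<in> J"

definition sim :: "alg \<Rightarrow> alg \<Rightarrow> bool" where
  "sim X Y \<longleftrightarrow> asub X Y \<in> J"

definition lval :: "letter \<Rightarrow> int" where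
  "lval a = (if a = R then 1 else -1)"

definition elev :: "nat \<Rightarrow> word \<Rightarrow> int" where
  "elev k W = (\<Sum>i<k. lval (W ! i))"

definition elevations :: "word \<Rightarrow> int multiset" where
  "elevations W = mset (map (\<lambda>k. elev k W) [0..<Suc (length W)])"

end

theory Submission
  imports Defs
begin

fun ev :: "word \<Rightarrow> int multiset" where
  "ev [] = {#0#}"
| "ev (a # w) = add_mset 0 (image_mset (\<lambda>x. lval a + x) (ev w))"

definition S :: "word \<Rightarrow> int" where
  "S w = sum_list (map lval w)"

definition K :: "word \<Rightarrow> int multiset \<times> int" where
  "K w = (ev w, S w)"

definition comb :: "int multiset \<times> int \<Rightarrow> int multiset \<times> int \<Rightarrow> int multiset \<times> int" where
  "comb k1 k2 = (fst k1 + image_mset (\<lambda>x. snd k1 + x) (fst k2 - {#0#}), snd k1 + snd k2)"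

lemma elev_Suc_Cons: "elev (Suc k) (a # w) = lval a + elev k w"
  unfolding elev_def by (subst sum.lessThan_Suc_shift) simp

lemma elev_0: "elev 0 w = 0"
  by (simp add: elev_def)

lemma elevations_ev: "elevations w = ev w"
proof (induction w)
  case Nil
  then show ?case by (simp add: elevations_def elev_def)
next
  case (Cons a w)
  have eq: "[0..<Suc (Suc (length w))] = 0 # map Suc [0..<Suc (length w)]"
    by (simp add: upt_conv_Cons map_Suc_upt del: upt_Suc)
  have "elevations (a # w) = add_mset (elev 0 (a#w))
      (mset (map (\<lambda>k. elev (Suc k) (a # w)) [0..<Suc (length w)]))"
    unfolding elevations_def length_Cons eq by (simp only: list.map mset.simps map_map comp_def)
  also have "\<dots> = add_mset 0 (image_mset (\<lambda>x. lval a + x) (elevations w))"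
    unfolding elevations_def by (simp add: elev_Suc_Cons elev_0 mset_map image_mset.compositionality comp_def del: upt_Suc)
  finally show ?case using Cons by simp
qed

lemma zero_in_ev: "0 \<in># ev w"
  by (cases w) auto

lemma ev_append: "ev (u @ v) = ev u + image_mset (\<lambda>x. S u + x) (ev v - {#0#})"
proof (induction u)
  case Nil
  then show ?case using zero_in_ev[of v] by (simp add: S_def)
next
  case (Cons a u)
  show ?case using Cons
    by (simp add: S_def image_mset.compositionality comp_def add.assoc)
qed

lemma K_append: "K (u @ v) = comb (K u) (K v)"
  by (simp add: K_def comb_def ev_append S_def)

lemma S_count: "S w = int (count_list w R) - int (count_list w L)"
proof (induction w)
  case Nil then show ?case by (simp add: S_def)
next
  case (Cons a w) then show ?case by (cases a) (auto simp: S_def lval_def)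
qed

lemma balanced_S: "balanced w \<Longrightarrow> S w = 0"
  by (simp add: balanced_def S_count)

lemma S_append: "S (u @ v) = S u + S v"
  by (simp add: S_def)

lemma K_swap:
  assumes "balanced F" "balanced G"
  shows "K (F @ G) = K (G @ F)"
proof -
  have "ev F + (ev G - {#0#}) = ev G + (ev F - {#0#})"
  proof -
    obtain A where A: "ev F = add_mset 0 A" using multi_member_split[OF zero_in_ev[of F]] by blast
    obtain B where B: "ev G = add_mset 0 B" using multi_member_split[OF zero_in_ev[of G]] by blast
    show ?thesis unfolding A B by (simp add: add.commute)
  qed
  then show ?thesis using assms
    by (simp add: K_def ev_append balanced_S S_append)
qed

lemma univ_letter: "(UNIV :: letter set) = {L, R}"
  using letter.exhaust by auto

definition W :: "nat \<Rightarrow> word set" where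
  "W n = {w. length w = n}"

lemma finite_W: "finite (W n)"
proof -
  have "W n = {xs. set xs \<subseteq> UNIV \<and> length xs = n}" by (simp add: W_def)
  then show ?thesis using finite_lists_length_eq[of "UNIV :: letter set" n]
    by (simp add: univ_letter)
qed

lemma split_sum:
  assumes "i \<le> n"
  shows "(\<Sum>w\<in>W n. f (take i w) (drop i w)) = (\<Sum>u\<in>W i. \<Sum>v\<in>W (n - i). f u v)"
proof -
  have b: "bij_betw (\<lambda>w. (take i w, drop i w)) (W n) (W i \<times> W (n - i))"
  proof (rule bij_betw_byWitness[where f' = "\<lambda>(u, v). u @ v"])
    show "\<forall>a\<in>W n. (case (take i a, drop i a) of (u, v) \<Rightarrow> u @ v) = a" by simp
    show "\<forall>a'\<in>W i \<times> W (n - i). (take i (case a' of (u, v) \<Rightarrow> u @ v), drop i (case a' of (u, v) \<Rightarrow> u @ v)) = a'"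
      by (auto simp: W_def)
    show "(\<lambda>w. (take i w, drop i w)) ` W n \<subseteq> W i \<times> W (n - i)"
      using assms by (auto simp: W_def)
    show "(\<lambda>(u, v). u @ v) ` (W i \<times> W (n - i)) \<subseteq> W n"
      using assms by (auto simp: W_def)
  qed
  have "(\<Sum>w\<in>W n. f (take i w) (drop i w)) = (\<Sum>(u,v)\<in>W i \<times> W (n - i). f u v)"
    using sum.reindex_bij_betw[OF b, of "\<lambda>(u,v). f u v"] by simp
  also have "\<dots> = (\<Sum>u\<in>W i. \<Sum>v\<in>W (n - i). f u v)"
    by (simp add: sum.cartesian_product)
  finally show ?thesis .
qed

definition Phi :: "nat \<Rightarrow> (int multiset \<times> int \<Rightarrow> bool) \<Rightarrow> alg \<Rightarrow> complex" where
  "Phi n P p = (\<Sum>w\<in>W n. if P (K w) then p w else 0)"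

lemma Phi_mono: "Phi n P (mono x) = (if length x = n \<and> P (K x) then 1 else 0)"
proof -
  have "Phi n P (mono x) = (\<Sum>w\<in>W n. if w = x then (if P (K x) then 1 else 0) else 0)"
    unfolding Phi_def mono_def by (rule sum.cong) auto
  also have "\<dots> = (if length x = n \<and> P (K x) then 1 else 0)"
    using finite_W[of n] by (simp add: sum.delta W_def)
  finally show ?thesis .
qed

lemma Phi_lmult:
  assumes "\<And>m Q. Phi m Q p = 0"
  shows "Phi n P (amult a p) = 0"
proof -
  have "Phi n P (amult a p) = (\<Sum>w\<in>W n. \<Sum>i\<le>n. if P (K (take i w @ drop i w)) then a (take i w) * p (drop i w) else 0)"
    unfolding Phi_def amult_def by (rule sum.cong) (auto simp: W_def sum_distrib_left)
  also have "\<dots> = (\<Sum>i\<le>n. \<Sum>w\<in>W n. if P (K (take i w @ drop i w)) then a (take i w) * p (drop i w) else 0)"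
    by (rule sum.swap)
  also have "\<dots> = (\<Sum>i\<le>n. \<Sum>u\<in>W i. \<Sum>v\<in>W (n - i). if P (K (u @ v)) then a u * p v else 0)"
    apply (rule sum.cong[OF refl])
    subgoal for i using split_sum[of i n "\<lambda>u v. if P (K (u @ v)) then a u * p v else 0"] by simp
    done
  also have "\<dots> = (\<Sum>i\<le>n. \<Sum>u\<in>W i. a u * Phi (n - i) (\<lambda>k. P (comb (K u) k)) p)"
    unfolding Phi_def by (auto simp: sum_distrib_left K_append intro!: sum.cong)
  also have "\<dots> = 0" by (simp add: assms)
  finally show ?thesis .
qed

lemma Phi_rmult:
  assumes "\<And>m Q. Phi m Q p = 0"
  shows "Phi n P (amult p a) = 0"
proof -
  have "Phi n P (amult p a) = (\<Sum>w\<in>W n. \<Sum>i\<le>n. if P (K (take i w @ drop i w)) then p (take i w) * a (drop i w) else 0)"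
    unfolding Phi_def amult_def by (rule sum.cong) (auto simp: W_def sum_distrib_left)
  also have "\<dots> = (\<Sum>i\<le>n. \<Sum>w\<in>W n. if P (K (take i w @ drop i w)) then p (take i w) * a (drop i w) else 0)"
    by (rule sum.swap)
  also have "\<dots> = (\<Sum>i\<le>n. \<Sum>u\<in>W i. \<Sum>v\<in>W (n - i). if P (K (u @ v)) then p u * a v else 0)"
    apply (rule sum.cong[OF refl])
    subgoal for i using split_sum[of i n "\<lambda>u v. if P (K (u @ v)) then p u * a v else 0"] by simp
    done
  also have "\<dots> = (\<Sum>i\<le>n. \<Sum>v\<in>W (n - i). \<Sum>u\<in>W i. if P (K (u @ v)) then p u * a v else 0)"
    by (rule sum.cong[OF refl], rule sum.swap)
  also have "\<dots> = (\<Sum>i\<le>n. \<Sum>v\<in>W (n - i). a v * Phi i (\<lambda>k. P (comb k (K v))) p)"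
    unfolding Phi_def by (auto simp: sum_distrib_left K_append mult.commute intro!: sum.cong)
  also have "\<dots> = 0" by (simp add: assms)
  finally show ?thesis .
qed

lemma Phi_J: "p \<in> J \<Longrightarrow> Phi n P p = 0"
proof (induction p arbitrary: n P rule: J.induct)
  case (gen F G)
  have "Phi n P (asub (mono (F @ G)) (mono (G @ F))) = Phi n P (mono (F @ G)) - Phi n P (mono (G @ F))"
    unfolding Phi_def asub_def sum_subtractf[symmetric] by (rule sum.cong) auto
  then show ?case using K_swap[OF gen(3,4)] by (simp add: Phi_mono)
next
  case zero
  then show ?case by (simp add: Phi_def)
next
  case (add p q)
  have "Phi n P (aadd p q) = Phi n P p + Phi n P q"
    unfolding Phi_def aadd_def by (subst sum.distrib[symmetric]) (rule sum.cong, auto)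
  then show ?case using add by simp
next
  case (lmult p a)
  then show ?case using Phi_lmult by blast
next
  case (rmult p a)
  then show ?case using Phi_rmult by blast
qed

theorem lemma4p4:
  fixes X Y :: word
  assumes "balanced X" and "balanced Y" and "sim (mono X) (mono Y)"
  shows "elevations X = elevations Y"
proof -
  have "asub (mono X) (mono Y) \<in> J" using assms(3) by (simp add: sim_def)
  then have "Phi (length X) (\<lambda>k. k = K X) (asub (mono X) (mono Y)) = 0" by (rule Phi_J)
  moreover have "Phi (length X) (\<lambda>k. k = K X) (asub (mono X) (mono Y))
     = Phi (length X) (\<lambda>k. k = K X) (mono X) - Phi (length X) (\<lambda>k. k = K X) (mono Y)"
    unfolding Phi_def asub_def sum_subtractf[symmetric] by (rule sum.cong) auto
  ultimately have "K Y = K X" by (simp add: Phi_mono split: if_splits)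
  then show ?thesis by (simp add: K_def elevations_ev)
qed

end
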